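(* Let $(\bar N,g)$ be an $n$-dimensional Riemannian manifold isometrically embedded in $\mathbb{R}^S$, $N\subset\bar N$ compact, $1\le m\le n-1$. If $N$ contains no non-zero $m$-varifold with null weak mean curvature relative to $\bar N$, then $N$ contains no non-zero $m$-varifold with null generalized second fundamental form.
   Context: $G(S,m)$ is the Grassmannian of $m$-planes in $\mathbb{R}^S$, each $P$ identified with its orthogonal projection matrix $(P_{ij})$; $Q(x)=(Q_{ij}(x))$ is the orthogonal projection onto $T_x\bar N$; $G_m(N)=\{(x,P):x\in N,\ P\subset T_x\bar N\}$. An $m$-varifold on $N$ is any Radon measure $V$ on $G_m(N)$. Generalized curvature $B=(B_{ijk})\in L^1_{loc}(V)$: for all $\phi\in C^1_c(\mathbb{R}^S\times\mathbb{R}^{S\times S})$ and each $i$, $0=\int[P_{ij}D_j\phi+B_{ijk}D^*_{jk}\phi+B_{jij}\phi]\,dV$ (summation convention; $D_j=\partial/\partial x_j$, $D^*_{jk}=\partial/\partial P_{jk}$); generalized second fundamental form $A^k_{ij}=P_{lj}B_{ikl}-P_{lj}P_{iq}\partial_{x_q}Q_{kl}(x)$. Weak mean curvature in $\mathbb{R}^S$: $\mathbb{R}^S$-valued $H\in L^1_{loc}(V)$ with $\int\operatorname{div}_PX\,dV=-\int H\cdot X\,dV$ for all $X\in C^1_c(\mathbb{R}^S;\mathbb{R}^S)$, $\operatorname{div}_PX=\sum P_{ij}\partial_jX^i$. $V$ has weak mean curvature $H^N$ relative to $\bar N$ if as a varifold in $\mathbb{R}^S$ it has weak mean curvature $H^{\mathbb{R}^S}$;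 then $(H^N)_i=(H^{\mathbb{R}^S})_i-\sum_{j,k}P_{jk}\partial_{x_k}Q_{ij}(x)$. *)

theory Defs
  imports "HOL-Analysis.Analysis"
begin

section \<open>Smoothness (C-infinity) via iterated directional derivatives\<close>

fun iter_dd :: "'a list \<Rightarrow> ('a::real_normed_vector \<Rightarrow> 'b::real_normed_vector) \<Rightarrow> 'a \<Rightarrow> 'b" where
  "iter_dd [] f = f"
| "iter_dd (v # vs) f = (\<lambda>x. frechet_derivative (iter_dd vs f) (at x) v)"

text \<open>f is C-infinity on the open set U: all iterated directional derivatives
  exist and are differentiable at every point of U.\<close>
definition smooth_on :: "'a::real_normed_vector set \<Rightarrow> ('a \<Rightarrow> 'b::real_normed_vector) \<Rightarrow> bool" where
  "smooth_on U f \<longleftrightarrow> (\<forall>vs. \<forall>x\<in>U. iter_dd vs f differentiable (at x))"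

section \<open>Embedded submanifolds of R^S\<close>

text \<open>A local chart (parametrization) of Nbar: a smooth immersion of an open subset
  U of R^n that is a homeomorphism onto the relatively open piece Nbar \<inter> W.\<close>
definition chart :: "(real^'s) set \<Rightarrow> (real^'n) set \<Rightarrow> (real^'s) set \<Rightarrow> (real^'n \<Rightarrow> real^'s) \<Rightarrow> bool" where
  "chart Nbar U W \<phi> \<longleftrightarrow> open U \<and> open W \<and> smooth_on U \<phi> \<and> \<phi> ` U = Nbar \<inter> W \<and>
     inj_on \<phi> U \<and> continuous_on (Nbar \<inter> W) (inv_into U \<phi>) \<and>
     (\<forall>u\<in>U. inj (frechet_derivative \<phi> (at u)))"

text \<open>Nbar is an n-dimensional smooth embedded submanifold of R^S, n = CARD('n).
  (An isometrically embedded Riemannian manifold carries the induced metric, so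
  only the embedded submanifold matters.)\<close>
definition embedded_submanifold :: "('n::finite) itself \<Rightarrow> (real^'s) set \<Rightarrow> bool" where
  "embedded_submanifold TYPE('n) Nbar \<longleftrightarrow>
     (\<forall>p\<in>Nbar. \<exists>U W (\<phi>::real^'n \<Rightarrow> real^'s). chart Nbar U W \<phi> \<and> p \<in> W)"

definition tangent_space :: "('n::finite) itself \<Rightarrow> (real^'s) set \<Rightarrow> real^'s \<Rightarrow> (real^'s) set" where
  "tangent_space TYPE('n) Nbar x =
     {v. \<exists>U W (\<phi>::real^'n \<Rightarrow> real^'s) u. chart Nbar U W \<phi> \<and> u \<in> U \<and> \<phi> u = x \<and>
          v \<in> range (frechet_derivative \<phi> (at u))}"

text \<open>Q x is the orthogonal projection (matrix) onto T_x Nbar for x in Nbar, and Q is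
  smooth on an open neighbourhood of Nbar (so that its partial derivatives make sense).\<close>
definition tangent_projection :: "('n::finite) itself \<Rightarrow> (real^'s) set \<Rightarrow> (real^'s \<Rightarrow> real^'s^'s) \<Rightarrow> bool" where
  "tangent_projection TYPE('n) Nbar Q \<longleftrightarrow>
     (\<exists>Om. open Om \<and> Nbar \<subseteq> Om \<and> smooth_on Om Q) \<and>
     (\<forall>x\<in>Nbar. transpose (Q x) = Q x \<and> Q x ** Q x = Q x \<and>
                range ((*v) (Q x)) = tangent_space TYPE('n) Nbar x)"

section \<open>Grassmannian, G_m(N), varifolds\<close>

text \<open>G(S,m): m-planes identified with their orthogonal projection matrices.\<close>
definition grassmannian :: "nat \<Rightarrow> (real^'s^'s) set" where
  "grassmannian m = {P. transpose P = P \<and> P ** P = P \<and> rank P = m}"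

text \<open>G_m(N) = {(x,P). x \<in> N, P \<subseteq> T_x Nbar}; P \<subseteq> T_x Nbar iff Q(x) P = P.\<close>
definition Gm :: "nat \<Rightarrow> (real^'s) set \<Rightarrow> (real^'s \<Rightarrow> real^'s^'s) \<Rightarrow> ((real^'s) \<times> (real^'s^'s)) set" where
  "Gm m N Q = {(x, P). x \<in> N \<and> P \<in> grassmannian m \<and> Q x ** P = P}"

text \<open>An m-varifold on N: a Radon measure on G_m(N), i.e. a Borel measure on
  R^S x R^(SxS), finite on compact sets, concentrated on G_m(N).\<close>
definition varifold :: "nat \<Rightarrow> (real^'s) set \<Rightarrow> (real^'s \<Rightarrow> real^'s^'s) \<Rightarrow> ((real^'s) \<times> (real^'s^'s)) measure \<Rightarrow> bool" where
  "varifold m N Q V \<longleftrightarrow> sets V = sets borel \<and> (\<forall>K. compact K \<longrightarrow> emeasure V K < \<infinity>) \<and>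
     (AE z in V. z \<in> Gm m N Q)"

definition nonzero_measure :: "'a measure \<Rightarrow> bool" where
  "nonzero_measure V \<longleftrightarrow> emeasure V (space V) \<noteq> 0"

definition loc_integrable :: "('a::topological_space) measure \<Rightarrow> ('a \<Rightarrow> 'b::{banach,second_countable_topology}) \<Rightarrow> bool" where
  "loc_integrable V f \<longleftrightarrow> (\<forall>K. compact K \<longrightarrow> set_integrable V K f)"

text \<open>C^1 functions with compact support.\<close>
definition C1c :: "('a::euclidean_space \<Rightarrow> 'b::euclidean_space) \<Rightarrow> bool" where
  "C1c f \<longleftrightarrow> (\<exists>f'. (\<forall>x. (f has_derivative blinfun_apply (f' x)) (at x)) \<and> continuous_on UNIV f') \<and>
     compact (closure {x. f x \<noteq> 0})"

section \<open>Partial derivatives\<close>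

text \<open>D_j = d/dx_j and D*_jk = d/dP_jk for functions on R^S x R^(SxS).\<close>
definition Dx :: "((real^'s) \<times> (real^'s^'s) \<Rightarrow> real) \<Rightarrow> 's \<Rightarrow> (real^'s) \<times> (real^'s^'s) \<Rightarrow> real" where
  "Dx \<phi> j z = frechet_derivative \<phi> (at z) (axis j 1, 0)"

definition DP :: "((real^'s) \<times> (real^'s^'s) \<Rightarrow> real) \<Rightarrow> 's \<Rightarrow> 's \<Rightarrow> (real^'s) \<times> (real^'s^'s) \<Rightarrow> real" where
  "DP \<phi> j k z = frechet_derivative \<phi> (at z) (0, axis j (axis k 1))"

text \<open>dQ Q q x k l = partial derivative of Q_kl w.r.t. x_q at x.\<close>
definition dQ :: "(real^'s \<Rightarrow> real^'s^'s) \<Rightarrow> 's \<Rightarrow> real^'s \<Rightarrow> 's \<Rightarrow> 's \<Rightarrow> real" where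
  "dQ Q q x k l = (frechet_derivative Q (at x) (axis q 1)) $ k $ l"

definition divP :: "real^'s^'s \<Rightarrow> (real^'s \<Rightarrow> real^'s) \<Rightarrow> real^'s \<Rightarrow> real" where
  "divP P X x = (\<Sum>i\<in>UNIV. \<Sum>j\<in>UNIV. P $ i $ j * (frechet_derivative X (at x) (axis j 1)) $ i)"

section \<open>Generalized curvature and second fundamental form\<close>

definition generalized_curvature ::
  "((real^'s) \<times> (real^'s^'s)) measure \<Rightarrow> ((real^'s) \<times> (real^'s^'s) \<Rightarrow> 's \<Rightarrow> 's \<Rightarrow> 's \<Rightarrow> real) \<Rightarrow> bool" where
  "generalized_curvature V B \<longleftrightarrow>
     (\<forall>i j k. loc_integrable V (\<lambda>z. B z i j k)) \<and>
     (\<forall>\<phi> i. C1c \<phi> \<longrightarrow>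
        0 = integral\<^sup>L V (\<lambda>z. (\<Sum>j\<in>UNIV. (snd z) $ i $ j * Dx \<phi> j z)
               + (\<Sum>j\<in>UNIV. \<Sum>k\<in>UNIV. B z i j k * DP \<phi> j k z)
               + (\<Sum>j\<in>UNIV. B z j i j) * \<phi> z))"

text \<open>A^k_ij = P_lj B_ikl - P_lj P_iq dQ_kl/dx_q.\<close>
definition second_fundamental_form ::
  "(real^'s \<Rightarrow> real^'s^'s) \<Rightarrow> ((real^'s) \<times> (real^'s^'s) \<Rightarrow> 's \<Rightarrow> 's \<Rightarrow> 's \<Rightarrow> real) \<Rightarrow>
   (real^'s) \<times> (real^'s^'s) \<Rightarrow> 's \<Rightarrow> 's \<Rightarrow> 's \<Rightarrow> real" where
  "second_fundamental_form Q B z k i j =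
     (\<Sum>l\<in>UNIV. (snd z) $ l $ j * B z i k l)
     - (\<Sum>l\<in>UNIV. \<Sum>q\<in>UNIV. (snd z) $ l $ j * (snd z) $ i $ q * dQ Q q (fst z) k l)"

definition null_second_fundamental_form ::
  "(real^'s \<Rightarrow> real^'s^'s) \<Rightarrow> ((real^'s) \<times> (real^'s^'s)) measure \<Rightarrow> bool" where
  "null_second_fundamental_form Q V \<longleftrightarrow>
     (\<exists>B. generalized_curvature V B \<and>
          (AE z in V. \<forall>k i j. second_fundamental_form Q B z k i j = 0))"

section \<open>Weak mean curvature\<close>

definition weak_mean_curvature ::
  "((real^'s) \<times> (real^'s^'s)) measure \<Rightarrow> ((real^'s) \<times> (real^'s^'s) \<Rightarrow> real^'s) \<Rightarrow> bool" where
  "weak_mean_curvature V H \<longleftrightarrow> loc_integrable V H \<and>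
     (\<forall>X::real^'s \<Rightarrow> real^'s. C1c X \<longrightarrow>
        integral\<^sup>L V (\<lambda>z. divP (snd z) X (fst z)) = - integral\<^sup>L V (\<lambda>z. H z \<bullet> X (fst z)))"

text \<open>(H^N)_i = (H^{R^S})_i - P_jk dQ_ij/dx_k.\<close>
definition relative_mean_curvature ::
  "(real^'s \<Rightarrow> real^'s^'s) \<Rightarrow> ((real^'s) \<times> (real^'s^'s) \<Rightarrow> real^'s) \<Rightarrow> (real^'s) \<times> (real^'s^'s) \<Rightarrow> real^'s" where
  "relative_mean_curvature Q H z =
     (\<chi> i. H z $ i - (\<Sum>j\<in>UNIV. \<Sum>k\<in>UNIV. (snd z) $ j $ k * dQ Q k (fst z) i j))"

definition null_relative_mean_curvature ::
  "(real^'s \<Rightarrow> real^'s^'s) \<Rightarrow> ((real^'s) \<times> (real^'s^'s)) measure \<Rightarrow> bool" where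
  "null_relative_mean_curvature Q V \<longleftrightarrow>
     (\<exists>H. weak_mean_curvature V H \<and> (AE z in V. relative_mean_curvature Q H z = 0))"

end

theory Submission
  imports Defs
begin


definition uu :: "real \<Rightarrow> real" where "uu t = (max 0 t)^2"

lemma uu_deriv: "(uu has_real_derivative (2 * max 0 t)) (at t)"
proof (cases "t = 0")
  case True
  have "((\<lambda>y. (uu y - uu 0) / (y - 0)) \<longlongrightarrow> 0) (at 0)"
  proof (rule tendsto_0_le[where f="\<lambda>y. y" and K=1])
    show "((\<lambda>y. y) \<longlongrightarrow> (0::real)) (at 0)" by (simp add: tendsto_ident_at)
    show "\<forall>\<^sub>F x in at 0. norm ((uu x - uu 0) / (x - 0)) \<le> norm x * 1"
      by (auto simp: uu_def power2_eq_square abs_mult max_def)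
  qed
  then show ?thesis using True by (simp add: has_field_derivative_iff)
next
  case False
  show ?thesis
  proof (cases "t > 0")
    case True
    have "((\<lambda>y. y^2) has_real_derivative (2 * max 0 t)) (at t)"
      using True by (auto intro!: derivative_eq_intros)
    then show ?thesis
      by (rule has_field_derivative_transform_within_open[where S="{0<..}"])
        (use True in \<open>auto simp: uu_def\<close>)
  next
    case f2: False
    with False have "t < 0" by simp
    have "((\<lambda>y. 0) has_real_derivative 0) (at t)" by simp
    then have "((\<lambda>y. 0) has_real_derivative (2 * max 0 t)) (at t)" using \<open>t<0\<close> by simp
    then show ?thesis
      by (rule has_field_derivative_transform_within_open[where S="{..<0}"])
        (use \<open>t<0\<close> in \<open>auto simp: uu_def\<close>)
  qed
qed

lemma uu_nonneg: "uu t \<ge> 0" by (simp add: uu_def)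
lemma uu_pos: "t > 0 \<Longrightarrow> uu t > 0" by (simp add: uu_def)
lemma uu_zero: "t \<le> 0 \<Longrightarrow> uu t = 0" by (simp add: uu_def)
lemma uu_den: "uu s + uu (1 - s) > 0"
proof (cases "s > 0")
  case True then show ?thesis using uu_pos[of s] uu_nonneg[of "1-s"] by linarith
next
  case False then show ?thesis using uu_pos[of "1-s"] uu_nonneg[of s] by linarith
qed

lemma uu_deriv': "((\<lambda>z. uu (1 - z)) has_real_derivative -(2 * max 0 (1 - s))) (at s)"
proof -
  have "((\<lambda>z. 1 - z) has_real_derivative -1) (at s)"
    by (auto intro!: derivative_eq_intros)
  from DERIV_chain2[OF uu_deriv[of "1-s"] this] show ?thesis by simp
qed

definition ww :: "real \<Rightarrow> real" where "ww s = uu s / (uu s + uu (1 - s))"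
definition ww' :: "real \<Rightarrow> real" where
  "ww' s = ((2 * max 0 s) * (uu s + uu (1 - s)) - uu s * (2 * max 0 s - 2 * max 0 (1 - s))) / (uu s + uu (1 - s))^2"

lemma ww_deriv: "(ww has_real_derivative ww' s) (at s)"
  unfolding ww_def ww'_def
  using uu_den[of s]
  by (auto intro!: derivative_eq_intros uu_deriv uu_deriv' simp: power2_eq_square)

lemma uu_cont: "continuous_on UNIV uu"
  unfolding uu_def by (intro continuous_intros)

lemma ww'_cont: "continuous_on UNIV ww'"
  unfolding ww'_def using uu_den
  by (intro continuous_intros continuous_on_compose2[OF uu_cont]) (auto, metis less_irrefl)

lemma ww_one: "s \<ge> 1 \<Longrightarrow> ww s = 1"
  using uu_den[of s] by (simp add: ww_def uu_zero)
lemma ww_zero: "s \<le> 0 \<Longrightarrow> ww s = 0"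
  by (simp add: ww_def uu_zero)

lemma ww'_zero: "s \<ge> 1 \<Longrightarrow> ww' s = 0"
  by (simp add: ww'_def uu_zero max_def)

definition chi :: "real \<Rightarrow> 'a::real_inner \<Rightarrow> real" where "chi c P = ww (c - P \<bullet> P)"
definition chi' :: "real \<Rightarrow> 'a::real_inner \<Rightarrow> 'a \<Rightarrow> real" where
  "chi' c P v = ww' (c - P \<bullet> P) * (- (2 * (P \<bullet> v)))"

lemma chi_deriv: "(chi c has_derivative chi' c P) (at P)"
proof -
  have "((\<lambda>P. c - P \<bullet> P) has_derivative (\<lambda>v. - (2 * (P \<bullet> v)))) (at P)"
    by (auto intro!: derivative_eq_intros simp: inner_commute)
  from has_derivative_compose[OF this ww_deriv[unfolded has_field_derivative_def]]
  show ?thesis unfolding chi_def chi'_def by (simp add: o_def mult.commute)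
qed

lemma chi'_cont: "continuous_on UNIV (\<lambda>P. chi' c P v)"
  unfolding chi'_def
  by (intro continuous_intros continuous_on_compose2[OF ww'_cont]) auto

lemma chi_one: "P \<bullet> P \<le> c - 1 \<Longrightarrow> chi c P = 1"
  by (simp add: chi_def ww_one)
lemma chi'_zero: "P \<bullet> P \<le> c - 1 \<Longrightarrow> chi' c P v = 0"
  by (simp add: chi'_def ww'_zero)
lemma chi_supp: "{P. chi c P \<noteq> 0} \<subseteq> {P. P \<bullet> P \<le> c}"
proof (clarsimp simp: chi_def)
  fix P :: 'a assume "ww (c - P \<bullet> P) \<noteq> 0"
  then show "P \<bullet> P \<le> c" using ww_zero[of "c - P \<bullet> P"] by linarith
qed

definition C1d :: "('a::real_normed_vector \<Rightarrow> 'b::real_normed_vector) \<Rightarrow> ('a \<Rightarrow> 'a \<Rightarrow> 'b) \<Rightarrow> bool" where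
  "C1d f f' \<longleftrightarrow> (\<forall>x. (f has_derivative f' x) (at x)) \<and> (\<forall>v. continuous_on UNIV (\<lambda>x. f' x v))"

lemma C1d_imp_C1c:
  fixes f :: "'a::euclidean_space \<Rightarrow> 'b::euclidean_space"
  assumes "C1d f f'" "compact (closure {x. f x \<noteq> 0})"
  shows "C1c f"
proof -
  have bl: "bounded_linear (f' x)" for x
    using assms(1) has_derivative_bounded_linear unfolding C1d_def by blast
  have "(f has_derivative blinfun_apply (Blinfun (f' x))) (at x)" for x
    using assms(1) bl by (simp add: C1d_def bounded_linear_Blinfun_apply)
  moreover have "continuous_on UNIV (\<lambda>x. Blinfun (f' x))"
    by (rule continuous_on_blinfun_componentwise)
      (use assms(1) bl in \<open>simp add: C1d_def bounded_linear_Blinfun_apply\<close>)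
  ultimately show ?thesis using assms(2) unfolding C1c_def
    by (intro conjI exI[of _ "\<lambda>x. Blinfun (f' x)"]) auto
qed

lemma C1d_const: "C1d (\<lambda>x. k) (\<lambda>x v. 0)"
  by (simp add: C1d_def)

lemma C1d_comp:
  fixes g :: "'a::euclidean_space \<Rightarrow> real" and p :: "'b::euclidean_space \<Rightarrow> real"
  assumes g: "C1d g g'" and p: "C1d p p'"
  shows "C1d (\<lambda>z. g (fst z) * chi c (snd z) * p (snd z))
    (\<lambda>z v. g' (fst z) (fst v) * chi c (snd z) * p (snd z)
         + g (fst z) * (chi' c (snd z) (snd v) * p (snd z))
         + g (fst z) * chi c (snd z) * p' (snd z) (snd v))"
  unfolding C1d_def
proof (intro conjI allI)
  fix z :: "'a \<times> 'b"
  have g1: "((\<lambda>z. g (fst z)) has_derivative (\<lambda>v. g' (fst z) (fst v))) (at z)"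
    using has_derivative_compose[OF has_derivative_fst[OF has_derivative_ident] g[unfolded C1d_def, THEN conjunct1, rule_format, of "fst z"]]
    by simp
  have p1: "((\<lambda>z. p (snd z)) has_derivative (\<lambda>v. p' (snd z) (snd v))) (at z)"
    using has_derivative_compose[OF has_derivative_snd[OF has_derivative_ident] p[unfolded C1d_def, THEN conjunct1, rule_format, of "snd z"]]
    by simp
  have c1: "((\<lambda>z. chi c (snd z)) has_derivative (\<lambda>v. chi' c (snd z) (snd v))) (at z)"
    using has_derivative_compose[OF has_derivative_snd[OF has_derivative_ident] chi_deriv[of c "snd z"]]
    by simp
  show "((\<lambda>z. g (fst z) * chi c (snd z) * p (snd z)) has_derivative
        (\<lambda>v. g' (fst z) (fst v) * chi c (snd z) * p (snd z)
         + g (fst z) * (chi' c (snd z) (snd v) * p (snd z))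
         + g (fst z) * chi c (snd z) * p' (snd z) (snd v))) (at z)"
    by (rule has_derivative_eq_rhs[OF has_derivative_mult[OF has_derivative_mult[OF g1 c1] p1]])
       (simp add: algebra_simps fun_eq_iff)
next
  fix v :: "'a \<times> 'b"
  have gd: "\<And>x. (g has_derivative g' x) (at x)" and gcc: "\<And>w. continuous_on UNIV (\<lambda>x. g' x w)"
    using g unfolding C1d_def by auto
  have pd: "\<And>x. (p has_derivative p' x) (at x)" and pcc: "\<And>w. continuous_on UNIV (\<lambda>x. p' x w)"
    using p unfolding C1d_def by auto
  have gc: "continuous_on UNIV (\<lambda>z::'a\<times>'b. g' (fst z) (fst v))"
    by (rule continuous_on_compose2[OF gcc continuous_on_fst[OF continuous_on_id]]) simp
  have pc: "continuous_on UNIV (\<lambda>z::'a\<times>'b. p' (snd z) (snd v))"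
    by (rule continuous_on_compose2[OF pcc continuous_on_snd[OF continuous_on_id]]) simp
  have cc: "continuous_on UNIV (\<lambda>z::'a\<times>'b. chi' c (snd z) (snd v))"
    by (rule continuous_on_compose2[OF chi'_cont continuous_on_snd[OF continuous_on_id]]) simp
  have g0: "continuous_on UNIV g"
    by (rule continuous_at_imp_continuous_on) (use gd has_derivative_continuous in blast)
  have p0: "continuous_on UNIV p"
    by (rule continuous_at_imp_continuous_on) (use pd has_derivative_continuous in blast)
  have c0: "continuous_on UNIV (chi c :: 'b \<Rightarrow> real)"
    by (rule continuous_at_imp_continuous_on) (use chi_deriv has_derivative_continuous in blast)
  have g00: "continuous_on UNIV (\<lambda>z::'a\<times>'b. g (fst z))"
    by (rule continuous_on_compose2[OF g0 continuous_on_fst[OF continuous_on_id]]) simp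
  have p00: "continuous_on UNIV (\<lambda>z::'a\<times>'b. p (snd z))"
    by (rule continuous_on_compose2[OF p0 continuous_on_snd[OF continuous_on_id]]) simp
  have c00: "continuous_on UNIV (\<lambda>z::'a\<times>'b. chi c (snd z))"
    by (rule continuous_on_compose2[OF c0 continuous_on_snd[OF continuous_on_id]]) simp
  show "continuous_on UNIV (\<lambda>z. g' (fst z) (fst v) * chi c (snd z) * p (snd z)
         + g (fst z) * (chi' c (snd z) (snd v) * p (snd z))
         + g (fst z) * chi c (snd z) * p' (snd z) (snd v))"
    by (intro continuous_on_add continuous_on_mult gc pc cc g00 p00 c00)
qed

lemma supp_comp:
  fixes g :: "'a::euclidean_space \<Rightarrow> real" and p :: "'b::euclidean_space \<Rightarrow> real"
  assumes "compact (closure {x. g x \<noteq> 0})"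
  shows "compact (closure {z. g (fst z) * chi c (snd z) * p (snd z) \<noteq> 0})"
proof -
  let ?K = "closure {x. g x \<noteq> 0} \<times> cball (0::'b) (sqrt c)"
  have cK: "compact ?K" using assms by (intro compact_Times compact_cball)
  have sub: "{z. g (fst z) * chi c (snd z) * p (snd z) \<noteq> 0} \<subseteq> ?K"
  proof (clarsimp)
    fix x :: 'a and P :: 'b
    assume h: "g x \<noteq> 0" "chi c P \<noteq> 0" "p P \<noteq> 0"
    then have "x \<in> closure {x. g x \<noteq> 0}" by (intro closure_subset[THEN subsetD]) simp
    moreover have "P \<bullet> P \<le> c" using chi_supp h(2) by blast
    then have "norm P \<le> sqrt c" by (simp add: norm_eq_sqrt_inner)
    ultimately show "x \<in> closure {x. g x \<noteq> 0} \<and> norm P \<le> sqrt c" by simp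
  qed
  have "closure {z. g (fst z) * chi c (snd z) * p (snd z) \<noteq> 0} \<subseteq> ?K"
    by (rule closure_minimal[OF sub]) (rule compact_imp_closed[OF cK])
  then have "closure {z. g (fst z) * chi c (snd z) * p (snd z) \<noteq> 0} =
      ?K \<inter> closure {z. g (fst z) * chi c (snd z) * p (snd z) \<noteq> 0}" by blast
  moreover have "compact (?K \<inter> closure {z. g (fst z) * chi c (snd z) * p (snd z) \<noteq> 0})"
    by (rule compact_Int_closed[OF cK closed_closure])
  ultimately show ?thesis by metis
qed



locale vs =
  fixes V :: "((real^'s::finite) \<times> (real^'s^'s)) measure"
    and B :: "(real^'s) \<times> (real^'s^'s) \<Rightarrow> 's \<Rightarrow> 's \<Rightarrow> 's \<Rightarrow> real"
    and c :: real and K0 :: "((real^'s) \<times> (real^'s^'s)) set"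
  assumes sets_V: "sets V = sets borel"
    and fin: "emeasure V (space V) \<noteq> \<infinity>"
    and K0: "compact K0" and K0ae: "AE z in V. z \<in> K0"
    and good: "AE z in V. snd z \<bullet> snd z \<le> c - 1"
    and gc: "generalized_curvature V B"
    and Bm: "\<And>i j k. (\<lambda>z. B z i j k) \<in> borel_measurable borel"
begin

sublocale finite_measure V by (rule finite_measureI) (rule fin)

lemma space_V: "space V = UNIV" using sets_eq_imp_space_eq[OF sets_V] by simp

lemma measV: "f \<in> borel_measurable borel \<Longrightarrow> f \<in> borel_measurable V"
  using measurable_cong_sets[OF sets_V refl, of borel] by metis

lemma contV: "continuous_on UNIV f \<Longrightarrow> f \<in> borel_measurable V"
  by (intro measV borel_measurable_continuous_onI)

lemma cont_bound:
  fixes f :: "_ \<Rightarrow> 'b::real_normed_vector"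
  assumes "continuous_on UNIV f" shows "\<exists>M. AE z in V. norm (f z) \<le> M"
proof -
  have "compact (f ` K0)" by (rule compact_continuous_image[OF continuous_on_subset[OF assms] K0]) simp
  then obtain M where M: "\<forall>y\<in>f ` K0. norm y \<le> M" using compact_imp_bounded bounded_iff by metis
  show ?thesis by (rule exI[of _ M]) (use K0ae M in \<open>auto elim!: eventually_mono\<close>)
qed

lemma cont_int:
  fixes f :: "_ \<Rightarrow> 'b::{banach,second_countable_topology}"
  assumes "continuous_on UNIV f" shows "integrable V f"
proof -
  obtain M where "AE z in V. norm (f z) \<le> M" using cont_bound[OF assms] by blast
  then show ?thesis by (intro integrable_const_bound[where B=M] contV assms)
qed

lemma B_int: "integrable V (\<lambda>z. B z i j k)"
proof -
  have "set_integrable V K0 (\<lambda>z. B z i j k)"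
    using gc K0 unfolding generalized_curvature_def loc_integrable_def by blast
  then have "integrable V (\<lambda>z. indicator K0 z *\<^sub>R B z i j k)" by (simp add: set_integrable_def)
  then show ?thesis
    by (rule integrable_cong_AE_imp) (use K0ae in \<open>auto intro: measV Bm elim!: eventually_mono\<close>)
qed

lemma Bc_int:
  assumes "continuous_on UNIV f" shows "integrable V (\<lambda>z. B z i j k * f z)"
proof -
  obtain M where M: "AE z in V. norm (f z) \<le> M" using cont_bound[OF assms] by blast
  have i1: "integrable V (\<lambda>z. M * B z i j k)" using B_int by simp
  have m1: "(\<lambda>z. B z i j k * f z) \<in> borel_measurable V"
      by (intro borel_measurable_times measV Bm contV assms)
  have a1: "AE z in V. norm (B z i j k * f z) \<le> norm (M * B z i j k)"
      using M by (auto elim!: eventually_mono simp: abs_mult mult.commute[of "\<bar>B _ _ _ _\<bar>"] intro!: mult_right_mono)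
  show ?thesis using Bochner_Integration.integrable_bound[OF i1 m1 a1] .
qed


lemma C1d_cont: "C1d f f' \<Longrightarrow> continuous_on UNIV f"
  unfolding C1d_def by (meson continuous_at_imp_continuous_on has_derivative_continuous)
lemma C1d_cont': "C1d f f' \<Longrightarrow> continuous_on UNIV (\<lambda>x. f' x w)"
  unfolding C1d_def by blast
lemma C1d_lin0: "C1d f f' \<Longrightarrow> f' x 0 = 0"
  unfolding C1d_def by (meson has_derivative_bounded_linear bounded_linear.linear linear_0)

lemma cfst: "continuous_on UNIV f \<Longrightarrow> continuous_on UNIV (\<lambda>z. f (fst z))"
  by (rule continuous_on_compose2[OF _ continuous_on_fst[OF continuous_on_id]]) auto
lemma csnd: "continuous_on UNIV f \<Longrightarrow> continuous_on UNIV (\<lambda>z. f (snd z))"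
  by (rule continuous_on_compose2[OF _ continuous_on_snd[OF continuous_on_id]]) auto
lemma cP: "continuous_on UNIV (\<lambda>z::(real^'s) \<times> (real^'s^'s). snd z $ i $ j)"
  by (intro continuous_intros)

definition T where
  "T g g' p p' i z = (\<Sum>j\<in>UNIV. snd z $ i $ j * g' (fst z) (axis j 1)) * p (snd z)
     + g (fst z) * (\<Sum>j\<in>UNIV. \<Sum>k\<in>UNIV. B z i j k * p' (snd z) (axis j (axis k (1::real))))
     + (\<Sum>j\<in>UNIV. B z j i j) * g (fst z) * p (snd z)"

lemma T_int:
  fixes g :: "real^'s \<Rightarrow> real" and p :: "real^'s^'s \<Rightarrow> real"
  assumes g: "C1d g g'" and p: "C1d p p'"
  shows "integrable V (T g g' p p' i)"
proof -
  have cg: "continuous_on UNIV (\<lambda>z::(real^'s) \<times> (real^'s^'s). g (fst z))" by (rule cfst[OF C1d_cont[OF g]])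
  have cg': "continuous_on UNIV (\<lambda>z::(real^'s) \<times> (real^'s^'s). g' (fst z) w)" for w by (rule cfst[OF C1d_cont'[OF g]])
  have cp: "continuous_on UNIV (\<lambda>z::(real^'s) \<times> (real^'s^'s). p (snd z))" by (rule csnd[OF C1d_cont[OF p]])
  have cp': "continuous_on UNIV (\<lambda>z::(real^'s) \<times> (real^'s^'s). p' (snd z) w)" for w by (rule csnd[OF C1d_cont'[OF p]])
  have "integrable V (\<lambda>z. (\<Sum>j\<in>UNIV. snd z $ i $ j * g' (fst z) (axis j 1) * p (snd z))
     + (\<Sum>j\<in>UNIV. \<Sum>k\<in>UNIV. B z i j k * (g (fst z) * p' (snd z) (axis j (axis k (1::real)))))
     + (\<Sum>j\<in>UNIV. B z j i j * (g (fst z) * p (snd z))))"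
    apply (intro Bochner_Integration.integrable_add Bochner_Integration.integrable_sum Bc_int continuous_on_mult cg cp cp')
    apply (rule cont_int)
    apply (intro continuous_on_mult cP cg cg' cp cp' continuous_on_sum)
    done
  moreover have "T g g' p p' i = (\<lambda>z. (\<Sum>j\<in>UNIV. snd z $ i $ j * g' (fst z) (axis j 1) * p (snd z))
     + (\<Sum>j\<in>UNIV. \<Sum>k\<in>UNIV. B z i j k * (g (fst z) * p' (snd z) (axis j (axis k (1::real)))))
     + (\<Sum>j\<in>UNIV. B z j i j * (g (fst z) * p (snd z))))"
    by (simp add: fun_eq_iff T_def sum_distrib_left sum_distrib_right mult_ac)
  ultimately show ?thesis by simp
qed

lemma TEST:
  fixes g :: "real^'s \<Rightarrow> real" and p :: "real^'s^'s \<Rightarrow> real"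
  assumes g: "C1d g g'" and gs: "compact (closure {x. g x \<noteq> 0})" and p: "C1d p p'"
  shows "integral\<^sup>L V (T g g' p p' i) = 0"
proof -
  define \<phi> where "\<phi> = (\<lambda>z::(real^'s) \<times> (real^'s^'s). g (fst z) * chi c (snd z) * p (snd z))"
  define \<phi>' where "\<phi>' = (\<lambda>(z::(real^'s) \<times> (real^'s^'s)) v. g' (fst z) (fst v) * chi c (snd z) * p (snd z)
         + g (fst z) * (chi' c (snd z) (snd v) * p (snd z))
         + g (fst z) * chi c (snd z) * p' (snd z) (snd v))"
  have C: "C1d \<phi> \<phi>'" unfolding \<phi>_def \<phi>'_def by (rule C1d_comp[OF g p])
  have "C1c \<phi>" unfolding \<phi>_def by (rule C1d_imp_C1c[OF C[unfolded \<phi>_def] supp_comp[OF gs]])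
  then have eq0: "0 = integral\<^sup>L V (\<lambda>z. (\<Sum>j\<in>UNIV. (snd z) $ i $ j * Dx \<phi> j z)
               + (\<Sum>j\<in>UNIV. \<Sum>k\<in>UNIV. B z i j k * DP \<phi> j k z)
               + (\<Sum>j\<in>UNIV. B z j i j) * \<phi> z)"
    using gc unfolding generalized_curvature_def by blast
  have fd: "frechet_derivative \<phi> (at z) = \<phi>' z" for z
    using C unfolding C1d_def by (metis frechet_derivative_at)
  define F where "F = (\<lambda>z. (\<Sum>j\<in>UNIV. (snd z) $ i $ j * \<phi>' z (axis j 1, 0))
               + (\<Sum>j\<in>UNIV. \<Sum>k\<in>UNIV. B z i j k * \<phi>' z (0, axis j (axis k 1)))
               + (\<Sum>j\<in>UNIV. B z j i j) * \<phi> z)"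
  have eq1: "integral\<^sup>L V F = 0" using eq0 by (simp add: F_def Dx_def DP_def fd)
  have cphi: "continuous_on UNIV \<phi>" by (rule C1d_cont[OF C])
  have cphi': "continuous_on UNIV (\<lambda>z. \<phi>' z w)" for w by (rule C1d_cont'[OF C])
  have mF: "F \<in> borel_measurable V"
    unfolding F_def
    by (intro borel_measurable_add borel_measurable_sum borel_measurable_times measV Bm contV cP cphi cphi')
  have mT: "T g g' p p' i \<in> borel_measurable V"
    by (rule borel_measurable_integrable[OF T_int[OF g p]])
  have "AE z in V. F z = T g g' p p' i z"
    using good
  proof (rule eventually_mono)
    fix z :: "(real^'s) \<times> (real^'s^'s)"
    assume h: "snd z \<bullet> snd z \<le> c - 1"
    have c1: "chi c (snd z) = 1" by (rule chi_one[OF h])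
    have c2: "chi' c (snd z) w = 0" for w by (rule chi'_zero[OF h])
    have l1: "g' x 0 = 0" for x by (rule C1d_lin0[OF g])
    have l2: "p' x 0 = 0" for x by (rule C1d_lin0[OF p])
    show "F z = T g g' p p' i z"
      by (simp add: F_def T_def \<phi>_def \<phi>'_def c1 c2 l1 l2 sum_distrib_right sum_distrib_left mult_ac)
  qed
  then have "integral\<^sup>L V F = integral\<^sup>L V (T g g' p p' i)"
    by (rule integral_cong_AE[OF mF mT])
  with eq1 show ?thesis by simp
qed

lemma ax2: "axis j (axis k (1::real)) $ a $ b = (if j = a \<and> k = b then 1 else 0)"
  by (auto simp: axis_def)

lemma sum_ax2: "(\<Sum>j\<in>UNIV. \<Sum>k\<in>UNIV. f j k * axis j (axis k (1::real)) $ a $ b) = f a b"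
proof -
  have e: "\<And>j k. f j k * axis j (axis k (1::real)) $ a $ b = (if k = b then (if j = a then f j k else 0) else 0)"
    by (auto simp: ax2)
  show ?thesis unfolding e by (simp add: sum.delta)
qed

definition HB where "HB a z = (\<Sum>j\<in>UNIV. B z j a j)"

lemma E1: "T g g' (\<lambda>P. 1) (\<lambda>P v. 0) i z = (\<Sum>j\<in>UNIV. snd z $ i $ j * g' (fst z) (axis j 1)) + HB i z * g (fst z)"
  by (simp add: T_def HB_def)

lemma E3: "T g g' (\<lambda>P. P $ a $ b) (\<lambda>P v. v $ a $ b) a z =
   (\<Sum>j\<in>UNIV. snd z $ a $ j * g' (fst z) (axis j 1)) * snd z $ a $ b + g (fst z) * B z a a b
   + HB a z * g (fst z) * snd z $ a $ b"
  by (simp add: T_def HB_def sum_ax2)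

lemma E4:
  assumes sym: "snd z $ a $ b = snd z $ b $ a"
  shows "T g g' (\<lambda>P. P $ a $ b - P $ b $ a) (\<lambda>P v. v $ a $ b - v $ b $ a) a z =
   g (fst z) * (B z a a b - B z a b a)"
proof -
  have "(\<Sum>j\<in>UNIV. \<Sum>k\<in>UNIV. B z a j k * (axis j (axis k (1::real)) $ a $ b - axis j (axis k (1::real)) $ b $ a))
     = (\<Sum>j\<in>UNIV. \<Sum>k\<in>UNIV. B z a j k * axis j (axis k (1::real)) $ a $ b)
       - (\<Sum>j\<in>UNIV. \<Sum>k\<in>UNIV. B z a j k * axis j (axis k (1::real)) $ b $ a)"
    by (simp add: right_diff_distrib sum_subtractf)
  then show ?thesis using sym by (simp add: T_def sum_ax2)
qed

lemma mm1: "(axis p (axis k (1::real)) ** P) $ a $ b = (if p = a then P $ k $ b else 0)"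
proof -
  have e: "\<And>r. axis p (axis k (1::real)) $ a $ r * P $ r $ b = (if r = k then (if p = a then P $ k $ b else 0) else 0)"
    by (auto simp: ax2)
  show ?thesis unfolding matrix_matrix_mult_def by (simp add: e)
qed

lemma mm2: "(P ** axis p (axis k (1::real))) $ a $ b = (if k = b then P $ a $ p else 0)"
proof -
  have e: "\<And>r. P $ a $ r * axis p (axis k (1::real)) $ r $ b = (if r = p then (if k = b then P $ a $ p else 0) else 0)"
    by (auto simp: ax2)
  show ?thesis unfolding matrix_matrix_mult_def by (simp add: e)
qed

lemma if_sum0: "(\<Sum>k\<in>S. if Q then f k else (0::real)) = (if Q then (\<Sum>k\<in>S. f k) else 0)"
  by simp

lemma E2:
  assumes idem: "(snd z ** snd z) $ a $ b = snd z $ a $ b"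
  shows "T g g' (\<lambda>P. (P ** P) $ a $ b - P $ a $ b) (\<lambda>P v. (v ** P) $ a $ b + (P ** v) $ a $ b - v $ a $ b) j z =
   g (fst z) * ((\<Sum>k\<in>UNIV. B z j a k * snd z $ k $ b) + (\<Sum>p\<in>UNIV. B z j p b * snd z $ a $ p) - B z j a b)"
proof -
  let ?E = "\<lambda>p k. axis p (axis k (1::real))"
  have s1: "(\<Sum>p\<in>UNIV. \<Sum>k\<in>UNIV. B z j p k * (?E p k ** snd z) $ a $ b) = (\<Sum>k\<in>UNIV. B z j a k * snd z $ k $ b)"
    by (simp add: mm1 if_distrib[of "\<lambda>x. _ * x"] if_sum0 sum.delta cong: if_cong)
  have s2: "(\<Sum>p\<in>UNIV. \<Sum>k\<in>UNIV. B z j p k * (snd z ** ?E p k) $ a $ b) = (\<Sum>p\<in>UNIV. B z j p b * snd z $ a $ p)"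
    by (simp add: mm2 if_distrib[of "\<lambda>x. _ * x"] sum.delta' cong: if_cong)
  have "(\<Sum>p\<in>UNIV. \<Sum>k\<in>UNIV. B z j p k * ((?E p k ** snd z) $ a $ b + (snd z ** ?E p k) $ a $ b - ?E p k $ a $ b))
     = (\<Sum>p\<in>UNIV. \<Sum>k\<in>UNIV. B z j p k * (?E p k ** snd z) $ a $ b)
       + (\<Sum>p\<in>UNIV. \<Sum>k\<in>UNIV. B z j p k * (snd z ** ?E p k) $ a $ b)
       - (\<Sum>p\<in>UNIV. \<Sum>k\<in>UNIV. B z j p k * ?E p k $ a $ b)"
    by (simp add: algebra_simps sum.distrib sum_subtractf)
  also have "\<dots> = (\<Sum>k\<in>UNIV. B z j a k * snd z $ k $ b) + (\<Sum>p\<in>UNIV. B z j p b * snd z $ a $ p) - B z j a b"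
    by (simp only: s1 s2 sum_ax2)
  finally show ?thesis using idem by (simp add: T_def)
qed

lemma COMB:
  fixes z :: "(real^'s) \<times> (real^'s^'s)" and g :: "real^'s \<Rightarrow> real" and g' :: "real^'s \<Rightarrow> real^'s \<Rightarrow> real"
  assumes sym: "\<And>a b. snd z $ a $ b = snd z $ b $ a"
    and idem: "\<And>a b. (snd z ** snd z) $ a $ b = snd z $ a $ b"
  shows "(\<Sum>j\<in>UNIV. snd z $ i $ j * g' (fst z) (axis j 1)) + g (fst z) * (\<Sum>j\<in>UNIV. \<Sum>k\<in>UNIV. B z j i k * snd z $ k $ j)
    = 2 * T g g' (\<lambda>P. 1) (\<lambda>P v. 0) i z
      + (\<Sum>j\<in>UNIV. T g g' (\<lambda>P. (P ** P) $ i $ j - P $ i $ j) (\<lambda>P v. (v ** P) $ i $ j + (P ** v) $ i $ j - v $ i $ j) j z)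
      - (\<Sum>p\<in>UNIV. T g g' (\<lambda>P. P $ p $ i) (\<lambda>P v. v $ p $ i) p z)
      + (\<Sum>p\<in>UNIV. T g g' (\<lambda>P. P $ p $ i - P $ i $ p) (\<lambda>P v. v $ p $ i - v $ i $ p) p z)"
proof -
  define P where "P = snd z"
  define gv where "gv = g (fst z)"
  define G where "G = (\<lambda>j. g' (fst z) (axis j (1::real)))"
  have sym': "\<And>a b. P $ a $ b = P $ b $ a" using sym by (simp add: P_def)
  have idem': "\<And>a b. (\<Sum>k\<in>UNIV. P $ a $ k * P $ k $ b) = P $ a $ b"
    using idem by (simp add: P_def matrix_matrix_mult_def)
  have S2: "(\<Sum>j\<in>UNIV. T g g' (\<lambda>P. (P ** P) $ i $ j - P $ i $ j) (\<lambda>P v. (v ** P) $ i $ j + (P ** v) $ i $ j - v $ i $ j) j z)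
     = gv * ((\<Sum>j\<in>UNIV. \<Sum>k\<in>UNIV. B z j i k * P $ k $ j) + (\<Sum>p\<in>UNIV. HB p z * P $ i $ p) - HB i z)"
  proof -
    have "(\<Sum>j\<in>UNIV. T g g' (\<lambda>P. (P ** P) $ i $ j - P $ i $ j) (\<lambda>P v. (v ** P) $ i $ j + (P ** v) $ i $ j - v $ i $ j) j z)
      = (\<Sum>j\<in>UNIV. gv * ((\<Sum>k\<in>UNIV. B z j i k * P $ k $ j) + (\<Sum>p\<in>UNIV. B z j p j * P $ i $ p) - B z j i j))"
      by (intro sum.cong refl) (simp add: E2 idem gv_def P_def)
    also have "\<dots> = gv * ((\<Sum>j\<in>UNIV. \<Sum>k\<in>UNIV. B z j i k * P $ k $ j) + (\<Sum>j\<in>UNIV. \<Sum>p\<in>UNIV. B z j p j * P $ i $ p) - (\<Sum>j\<in>UNIV. B z j i j))"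
      by (simp add: sum_distrib_left sum.distrib sum_subtractf algebra_simps)
    also have "(\<Sum>j\<in>UNIV. \<Sum>p\<in>UNIV. B z j p j * P $ i $ p) = (\<Sum>p\<in>UNIV. HB p z * P $ i $ p)"
      by (subst sum.swap) (simp add: HB_def sum_distrib_right)
    finally show ?thesis by (simp add: HB_def)
  qed
  have S3: "(\<Sum>p\<in>UNIV. T g g' (\<lambda>P. P $ p $ i) (\<lambda>P v. v $ p $ i) p z)
     = (\<Sum>j\<in>UNIV. P $ i $ j * G j) + gv * (\<Sum>p\<in>UNIV. B z p p i) + gv * (\<Sum>p\<in>UNIV. HB p z * P $ p $ i)"
  proof -
    have "(\<Sum>p\<in>UNIV. T g g' (\<lambda>P. P $ p $ i) (\<lambda>P v. v $ p $ i) p z)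
      = (\<Sum>p\<in>UNIV. (\<Sum>j\<in>UNIV. P $ p $ j * G j) * P $ p $ i + gv * B z p p i + HB p z * gv * P $ p $ i)"
      by (intro sum.cong refl) (simp add: E3 gv_def P_def G_def)
    also have "\<dots> = (\<Sum>p\<in>UNIV. (\<Sum>j\<in>UNIV. P $ p $ j * G j) * P $ p $ i) + gv * (\<Sum>p\<in>UNIV. B z p p i) + gv * (\<Sum>p\<in>UNIV. HB p z * P $ p $ i)"
      by (simp add: sum.distrib sum_distrib_left mult_ac)
    also have "(\<Sum>p\<in>UNIV. (\<Sum>j\<in>UNIV. P $ p $ j * G j) * P $ p $ i) = (\<Sum>j\<in>UNIV. (\<Sum>p\<in>UNIV. P $ j $ p * P $ p $ i) * G j)"
    proof -
      have "(\<Sum>p\<in>UNIV. (\<Sum>j\<in>UNIV. P $ p $ j * G j) * P $ p $ i) = (\<Sum>p\<in>UNIV. \<Sum>j\<in>UNIV. P $ p $ j * P $ p $ i * G j)"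
        by (simp add: sum_distrib_right sum_distrib_left mult_ac)
      also have "\<dots> = (\<Sum>p\<in>UNIV. \<Sum>j\<in>UNIV. P $ j $ p * P $ p $ i * G j)"
        by (intro sum.cong refl) (metis sym')
      also have "\<dots> = (\<Sum>j\<in>UNIV. \<Sum>p\<in>UNIV. P $ j $ p * P $ p $ i * G j)"
        by (rule sum.swap)
      also have "\<dots> = (\<Sum>j\<in>UNIV. (\<Sum>p\<in>UNIV. P $ j $ p * P $ p $ i) * G j)"
        by (simp add: sum_distrib_right)
      finally show ?thesis .
    qed
    also have "\<dots> = (\<Sum>j\<in>UNIV. P $ i $ j * G j)"
      by (simp only: idem', intro sum.cong refl, metis sym')
    finally show ?thesis .
  qed
  have S4: "(\<Sum>p\<in>UNIV. T g g' (\<lambda>P. P $ p $ i - P $ i $ p) (\<lambda>P v. v $ p $ i - v $ i $ p) p z)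
     = gv * ((\<Sum>p\<in>UNIV. B z p p i) - HB i z)"
  proof -
    have "(\<Sum>p\<in>UNIV. T g g' (\<lambda>P. P $ p $ i - P $ i $ p) (\<lambda>P v. v $ p $ i - v $ i $ p) p z)
      = (\<Sum>p\<in>UNIV. gv * (B z p p i - B z p i p))"
      by (intro sum.cong refl) (simp add: E4 sym gv_def)
    then show ?thesis by (simp add: sum_distrib_left sum_subtractf right_diff_distrib HB_def)
  qed
  have S1: "T g g' (\<lambda>P. 1) (\<lambda>P v. 0) i z = (\<Sum>j\<in>UNIV. P $ i $ j * G j) + HB i z * gv"
    by (simp add: E1 P_def G_def gv_def)
  have sw: "(\<Sum>p\<in>UNIV. HB p z * P $ i $ p) = (\<Sum>p\<in>UNIV. HB p z * P $ p $ i)"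
    by (simp add: sym'[of i])
  show ?thesis
    unfolding S1 S2 S3 S4 sw
    by (simp add: P_def G_def gv_def algebra_simps)
qed

end

lemma bl_nth2: "bounded_linear (\<lambda>P::real^'s^'s. P $ a $ b)"
  using bounded_linear_compose[OF bounded_linear_vec_nth[of b] bounded_linear_vec_nth[of a]] by simp

lemma hd_nth2: "((\<lambda>P::real^'s^'s. P $ a $ b) has_derivative (\<lambda>v. v $ a $ b)) F"
  using bounded_linear.has_derivative[OF bl_nth2 has_derivative_ident] .

lemma C1d_nth2: "C1d (\<lambda>P::real^'s^'s. P $ a $ b) (\<lambda>P v. v $ a $ b)"
  by (simp add: C1d_def hd_nth2)

lemma C1d_pd: "C1d (\<lambda>P::real^'s^'s. P $ a $ b - P $ b $ a) (\<lambda>P v. v $ a $ b - v $ b $ a)"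
  unfolding C1d_def by (auto intro!: has_derivative_diff hd_nth2)

lemma C1d_pq: "C1d (\<lambda>P::real^'s^'s. (P ** P) $ a $ b - P $ a $ b) (\<lambda>P v. (v ** P) $ a $ b + (P ** v) $ a $ b - v $ a $ b)"
  unfolding C1d_def
proof (intro conjI allI)
  fix P :: "real^'s^'s"
  have "((\<lambda>P::real^'s^'s. (\<Sum>k\<in>UNIV. P $ a $ k * P $ k $ b) - P $ a $ b) has_derivative
     (\<lambda>v. (\<Sum>k\<in>UNIV. P $ a $ k * v $ k $ b + v $ a $ k * P $ k $ b) - v $ a $ b)) (at P)"
    by (intro has_derivative_diff has_derivative_sum has_derivative_mult hd_nth2)
  then show "((\<lambda>P::real^'s^'s. (P ** P) $ a $ b - P $ a $ b) has_derivative
     (\<lambda>v. (v ** P) $ a $ b + (P ** v) $ a $ b - v $ a $ b)) (at P)"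
    by (simp add: matrix_matrix_mult_def sum.distrib algebra_simps)
next
  fix v :: "real^'s^'s"
  show "continuous_on UNIV (\<lambda>P. (v ** P) $ a $ b + (P ** v) $ a $ b - v $ a $ b)"
    unfolding matrix_matrix_mult_def by (simp add: continuous_intros)
qed



lemma sym_of_transpose: "transpose P = P \<Longrightarrow> P $ a $ b = P $ b $ a"
proof -
  assume h: "transpose P = P"
  have "transpose P $ a $ b = P $ b $ a" by (simp add: transpose_def)
  then show ?thesis using h by simp
qed

lemma idem_sum: "P ** P = P \<Longrightarrow> (\<Sum>k\<in>UNIV. P $ a $ k * P $ k $ b) = (P $ a $ b :: real)"
proof -
  assume h: "P ** P = P"
  have "(P ** P) $ a $ b = (\<Sum>k\<in>UNIV. P $ a $ k * P $ k $ b)" by (simp add: matrix_matrix_mult_def)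
  then show ?thesis using h by simp
qed

lemma proj_bound:
  fixes P :: "real^'s^'s"
  assumes t: "transpose P = P" and i: "P ** P = P"
  shows "P \<bullet> P \<le> real CARD('s)"
proof -
  have row: "(\<Sum>j\<in>UNIV. (P $ a $ j)^2) = P $ a $ a" for a
  proof -
    have "(\<Sum>j\<in>UNIV. (P $ a $ j)^2) = (\<Sum>j\<in>UNIV. P $ a $ j * P $ j $ a)"
      by (intro sum.cong refl) (metis power2_eq_square sym_of_transpose[OF t])
    also have "\<dots> = P $ a $ a" by (rule idem_sum[OF i])
    finally show ?thesis .
  qed
  have diag: "P $ a $ a \<le> 1" for a
  proof -
    have "(P $ a $ a)^2 \<le> (\<Sum>j\<in>UNIV. (P $ a $ j)^2)"
      by (rule member_le_sum) auto
    then have "(P $ a $ a)^2 \<le> P $ a $ a" using row by simp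
    then have "P $ a $ a * P $ a $ a \<le> P $ a $ a * 1" by (simp add: power2_eq_square)
    then show ?thesis
    proof (cases "P $ a $ a \<le> 1")
      case False
      then have "P $ a $ a * 1 < P $ a $ a * P $ a $ a"
        by (intro mult_strict_left_mono) auto
      with \<open>P $ a $ a * P $ a $ a \<le> P $ a $ a * 1\<close> show ?thesis by simp
    qed
  qed
  have "P \<bullet> P = (\<Sum>a\<in>UNIV. \<Sum>j\<in>UNIV. (P $ a $ j)^2)"
    by (simp add: inner_vec_def power2_eq_square)
  also have "\<dots> = (\<Sum>a\<in>UNIV. P $ a $ a)" by (simp add: row)
  also have "\<dots> \<le> (\<Sum>a\<in>(UNIV::'s set). 1)" by (rule sum_mono) (rule diag)
  finally show ?thesis by simp
qed

lemma SFF: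
  fixes z :: "(real^'s) \<times> (real^'s^'s)"
  assumes s: "\<And>j. second_fundamental_form Q B z i j j = 0"
    and i: "\<And>a b. (\<Sum>k\<in>UNIV. snd z $ a $ k * snd z $ k $ b) = snd z $ a $ b"
  shows "(\<Sum>j\<in>UNIV. \<Sum>k\<in>UNIV. B z j i k * snd z $ k $ j)
       = (\<Sum>j\<in>UNIV. \<Sum>k\<in>UNIV. snd z $ j $ k * dQ Q k (fst z) i j)"
proof -
  let ?P = "snd z" and ?x = "fst z"
  have "(\<Sum>j\<in>UNIV. \<Sum>k\<in>UNIV. B z j i k * ?P $ k $ j)
      = (\<Sum>j\<in>UNIV. \<Sum>l\<in>UNIV. \<Sum>q\<in>UNIV. ?P $ l $ j * ?P $ j $ q * dQ Q q ?x i l)"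
  proof (rule sum.cong[OF refl])
    fix j :: 's
    have "second_fundamental_form Q B z i j j = 0" by (rule s)
    then show "(\<Sum>k\<in>UNIV. B z j i k * ?P $ k $ j) = (\<Sum>l\<in>UNIV. \<Sum>q\<in>UNIV. ?P $ l $ j * ?P $ j $ q * dQ Q q ?x i l)"
      by (simp add: second_fundamental_form_def mult.commute)
  qed
  also have "\<dots> = (\<Sum>l\<in>UNIV. \<Sum>q\<in>UNIV. \<Sum>j\<in>UNIV. ?P $ l $ j * ?P $ j $ q * dQ Q q ?x i l)"
    by (subst sum.swap, rule sum.cong[OF refl], rule sum.swap)
  also have "\<dots> = (\<Sum>l\<in>UNIV. \<Sum>q\<in>UNIV. ?P $ l $ q * dQ Q q ?x i l)"
    by (simp add: sum_distrib_right[symmetric] i)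
  finally show ?thesis .
qed

lemma vec_sum_nth: "(\<Sum>a\<in>S. f a) $ i = (\<Sum>a\<in>S. f a $ i)"
  by (induction S rule: infinite_finite_induct) auto

lemma vec_as_sum: "(\<chi> i. f i) = (\<Sum>a\<in>UNIV. f a *\<^sub>R axis a (1::real))"
proof -
  have "(\<Sum>a\<in>UNIV. f a *\<^sub>R axis a (1::real)) $ i = f i" for i
  proof -
    have e: "\<And>a. f a * axis a (1::real) $ i = (if a = i then f a else 0)" by (simp add: axis_def)
    show ?thesis by (simp add: vec_sum_nth e)
  qed
  then show ?thesis by (simp add: vec_eq_iff)
qed

lemma Bm_of_loc:
  fixes V :: "('a::{euclidean_space}) measure" and f :: "'a \<Rightarrow> real"
  assumes sV: "sets V = sets borel" and li: "loc_integrable V f"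
  shows "f \<in> borel_measurable borel"
proof (rule borel_measurable_LIMSEQ_real[where u="\<lambda>n z. indicator (cball 0 (real n)) z * f z"])
  fix z :: 'a
  obtain n0 :: nat where "norm z \<le> real n0" using real_arch_simple by blast
  then have "\<forall>n\<ge>n0. indicator (cball 0 (real n)) z * f z = f z"
    by (auto simp: indicator_def)
  then show "(\<lambda>n. indicator (cball 0 (real n)) z * f z) \<longlonglongrightarrow> f z"
    by (intro tendsto_eventually) (auto simp: eventually_sequentially)
next
  fix n :: nat
  have "set_integrable V (cball 0 (real n)) f" using li unfolding loc_integrable_def by auto
  then have "(\<lambda>z. indicator (cball 0 (real n)) z *\<^sub>R f z) \<in> borel_measurable V"
    unfolding set_integrable_def by (rule borel_measurable_integrable)
  show "(\<lambda>z. indicator (cball 0 (real n)) z * f z) \<in> borel_measurable borel"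
  proof -
    have "borel_measurable V = (borel_measurable borel :: ('a \<Rightarrow> real) set)"
      by (rule measurable_cong_sets[OF sV refl])
    then show ?thesis using \<open>(\<lambda>z. indicator (cball 0 (real n)) z *\<^sub>R f z) \<in> borel_measurable V\<close> by simp
  qed
qed

lemma dQ_cont:
  assumes "tangent_projection TYPE('n::finite) Nbar Q" and "N \<subseteq> Nbar"
  shows "continuous_on N (\<lambda>x. dQ Q q x k l)"
proof -
  obtain Om where Om: "open Om" "Nbar \<subseteq> Om" "smooth_on Om Q"
    using assms(1) unfolding tangent_projection_def by blast
  show ?thesis
  proof (rule continuous_at_imp_continuous_on, rule ballI)
    fix x assume "x \<in> N"
    then have "x \<in> Om" using Om assms(2) by blast
    then have "iter_dd [axis q 1] Q differentiable (at x)" using Om(3) unfolding smooth_on_def by blast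
    then have "isCont (\<lambda>x. frechet_derivative Q (at x) (axis q 1)) x"
      by (simp add: differentiable_imp_continuous_within)
    then show "isCont (\<lambda>x. dQ Q q x k l) x"
      unfolding dQ_def by (intro continuous_intros)
  qed
qed

theorem lemma7p2:
  fixes Nbar N :: "(real^'s) set"
    and Q :: "real^'s \<Rightarrow> real^'s^'s"
    and m :: nat
  assumes "embedded_submanifold TYPE('n::finite) Nbar"
    and "tangent_projection TYPE('n) Nbar Q"
    and "N \<subseteq> Nbar" and "compact N"
    and "1 \<le> m" and "m \<le> CARD('n) - 1"
    and "\<not> (\<exists>V. varifold m N Q V \<and> nonzero_measure V \<and> null_relative_mean_curvature Q V)"
  shows "\<not> (\<exists>V. varifold m N Q V \<and> nonzero_measure V \<and> null_second_fundamental_form Q V)"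
proof
  assume "\<exists>V. varifold m N Q V \<and> nonzero_measure V \<and> null_second_fundamental_form Q V"
  then obtain V B where var: "varifold m N Q V" and nz: "nonzero_measure V"
    and gcB: "generalized_curvature V B"
    and sffae: "AE z in V. \<forall>k i j. second_fundamental_form Q B z k i j = 0"
    unfolding null_second_fundamental_form_def by blast
  have sets_V: "sets V = sets borel" and cpt: "\<And>K. compact K \<Longrightarrow> emeasure V K < \<infinity>"
    and aeG: "AE z in V. z \<in> Gm m N Q"
    using var unfolding varifold_def by auto
  have space_V: "space V = UNIV" using sets_eq_imp_space_eq[OF sets_V] by simp
  obtain r where r: "N \<subseteq> cball 0 r"
    using compact_imp_bounded[OF assms(4)] bounded_subset_cball by (metis bounded_subset_cball subset_cball order_trans dist_0_norm mem_cball_0 bounded_iff subsetI)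
  define c where "c = real CARD('s) + 1"
  define K0 where "K0 = cball (0::real^'s) r \<times> cball (0::real^'s^'s) (sqrt (real CARD('s)))"
  have cK0: "compact K0" unfolding K0_def by (intro compact_Times compact_cball)
  have K0s: "K0 \<in> sets V" unfolding sets_V by (rule borel_closed[OF compact_imp_closed[OF cK0]])
  have aeGood: "AE z in V. fst z \<in> N \<and> transpose (snd z) = snd z \<and> snd z ** snd z = snd z"
    using aeG by (auto elim!: eventually_mono simp: Gm_def grassmannian_def)
  have aeK0: "AE z in V. z \<in> K0"
    using aeGood
  proof (rule eventually_mono)
    fix z :: "(real^'s) \<times> (real^'s^'s)"
    assume h: "fst z \<in> N \<and> transpose (snd z) = snd z \<and> snd z ** snd z = snd z"
    have "snd z \<bullet> snd z \<le> real CARD('s)" using proj_bound h by blast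
    then have "norm (snd z) \<le> sqrt (real CARD('s))" by (simp add: norm_eq_sqrt_inner)
    moreover have "fst z \<in> cball 0 r" using h r by blast
    ultimately show "z \<in> K0" unfolding K0_def by (cases z) auto
  qed
  have aegood: "AE z in V. snd z \<bullet> snd z \<le> c - 1"
    using aeGood
  proof (rule eventually_mono)
    fix z :: "(real^'s) \<times> (real^'s^'s)"
    assume h: "fst z \<in> N \<and> transpose (snd z) = snd z \<and> snd z ** snd z = snd z"
    show "snd z \<bullet> snd z \<le> c - 1" using proj_bound[of "snd z"] h by (simp add: c_def)
  qed
  have fin: "emeasure V (space V) \<noteq> \<infinity>"
  proof -
    have cs: "UNIV - K0 \<in> sets V" unfolding sets_V
      by (intro borel_open) (simp add: open_Diff compact_imp_closed cK0)
    have n0: "emeasure V (UNIV - K0) = 0"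
      using AE_iff_measurable[OF cs, of "\<lambda>z. z \<in> K0"] aeK0 space_V by auto
    have "emeasure V (K0 \<union> (UNIV - K0)) \<le> emeasure V K0 + emeasure V (UNIV - K0)"
      by (rule emeasure_subadditive[OF K0s cs])
    then have "emeasure V UNIV \<le> emeasure V K0" using n0 by simp
    then show ?thesis using cpt[OF cK0] space_V by (auto simp: top_unique)
  qed
  have Bm: "\<And>i j k. (\<lambda>z. B z i j k) \<in> borel_measurable borel"
    using gcB unfolding generalized_curvature_def by (blast intro: Bm_of_loc[OF sets_V])
  interpret vs V B c K0
    by unfold_locales (use sets_V fin cK0 aeK0 aegood gcB Bm in auto)
  have cdQ: "\<And>q k l. continuous_on N (\<lambda>x. dQ Q q x k l)"
    by (rule dQ_cont[OF assms(2) assms(3)])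
  define h where "h i z = indicator N (fst z) * (\<Sum>j\<in>UNIV. \<Sum>k\<in>UNIV. snd z $ j $ k * dQ Q k (fst z) i j)"
    for i and z :: "(real^'s) \<times> (real^'s^'s)"
  define H where "H z = (\<chi> i. h i z)" for z
  have mh: "h i \<in> borel_measurable V" for i
  proof -
    have m1: "(\<lambda>x. indicator N x *\<^sub>R dQ Q k x i j) \<in> borel_measurable borel" for k j
      by (rule borel_measurable_continuous_on_indicator[OF borel_closed[OF compact_imp_closed[OF assms(4)]] cdQ])
    have m2: "(\<lambda>z::(real^'s) \<times> (real^'s^'s). indicator N (fst z) *\<^sub>R dQ Q k (fst z) i j) \<in> borel_measurable borel" for k j
      by (rule measurable_compose[OF borel_measurable_continuous_onI[OF continuous_on_fst[OF continuous_on_id]] m1])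
    have "h i = (\<lambda>z. \<Sum>j\<in>UNIV. \<Sum>k\<in>UNIV. snd z $ j $ k * (indicator N (fst z) *\<^sub>R dQ Q k (fst z) i j))"
      by (simp add: h_def fun_eq_iff sum_distrib_left mult_ac)
    also have "\<dots> \<in> borel_measurable V"
      by (intro borel_measurable_sum borel_measurable_times measV m2 contV cP)
    finally show ?thesis .
  qed
  have aeh: "AE z in V. \<forall>i. h i z = (\<Sum>j\<in>UNIV. \<Sum>k\<in>UNIV. B z j i k * snd z $ k $ j)"
    using aeGood sffae
  proof (eventually_elim)
    case (elim z)
    have i: "\<And>a b. (\<Sum>k\<in>UNIV. snd z $ a $ k * snd z $ k $ b) = snd z $ a $ b"
      using elim(1) idem_sum by blast
    show ?case
    proof
      fix i
      have "(\<Sum>j\<in>UNIV. \<Sum>k\<in>UNIV. B z j i k * snd z $ k $ j)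
        = (\<Sum>j\<in>UNIV. \<Sum>k\<in>UNIV. snd z $ j $ k * dQ Q k (fst z) i j)"
        by (rule SFF[OF _ i]) (use elim(2) in blast)
      then show "h i z = (\<Sum>j\<in>UNIV. \<Sum>k\<in>UNIV. B z j i k * snd z $ k $ j)"
        using elim(1) by (simp add: h_def)
    qed
  qed
  have hint: "integrable V (h i)" for i
  proof -
    have "integrable V (\<lambda>z. \<Sum>j\<in>UNIV. \<Sum>k\<in>UNIV. B z j i k * snd z $ k $ j)"
      by (intro Bochner_Integration.integrable_sum Bc_int cP)
    then show ?thesis
      by (rule integrable_cong_AE_imp[OF _ mh]) (use aeh in \<open>auto elim!: eventually_mono\<close>)
  qed
  have Hsum: "H = (\<lambda>z. \<Sum>a\<in>UNIV. h a z *\<^sub>R axis a (1::real))"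
    by (simp add: H_def vec_as_sum fun_eq_iff)
  have Hint: "integrable V H"
    unfolding Hsum by (intro Bochner_Integration.integrable_sum integrable_scaleR_left hint)
  have "weak_mean_curvature V H"
    unfolding weak_mean_curvature_def
  proof (intro conjI allI impI)
    show "loc_integrable V H"
      unfolding loc_integrable_def set_integrable_def
    proof (intro allI impI)
      fix K :: "((real^'s) \<times> (real^'s^'s)) set" assume "compact K"
      then have "K \<in> sets V" unfolding sets_V by (intro borel_closed compact_imp_closed)
      then show "integrable V (\<lambda>z. indicator K z *\<^sub>R H z)" by (rule integrable_mult_indicator[OF _ Hint])
    qed
  next
    fix X :: "real^'s \<Rightarrow> real^'s" assume "C1c X"
    then obtain X' where X'd: "\<And>x. (X has_derivative blinfun_apply (X' x)) (at x)"
      and X'c: "continuous_on UNIV X'" and Xs: "compact (closure {x. X x \<noteq> 0})"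
      unfolding C1c_def by blast
    define g where "g i x = X x $ i" for i x
    define g' where "g' i x v = X' x v $ i" for i x v
    have gC: "C1d (g i) (g' i)" for i
      unfolding C1d_def g_def g'_def
    proof (intro conjI allI)
      fix x show "((\<lambda>x. X x $ i) has_derivative (\<lambda>v. X' x v $ i)) (at x)"
        by (rule bounded_linear.has_derivative[OF bounded_linear_vec_nth X'd])
    next
      fix v show "continuous_on UNIV (\<lambda>x. X' x v $ i)"
        by (intro continuous_intros X'c)
    qed
    have gs: "compact (closure {x. g i x \<noteq> 0})" for i
    proof -
      have "closure {x. g i x \<noteq> 0} \<subseteq> closure {x. X x \<noteq> 0}"
        by (rule closure_mono) (auto simp: g_def)
      then have "closure {x. g i x \<noteq> 0} = closure {x. X x \<noteq> 0} \<inter> closure {x. g i x \<noteq> 0}" by blast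
      moreover have "compact (closure {x. X x \<noteq> 0} \<inter> closure {x. g i x \<noteq> 0})"
        by (rule compact_Int_closed[OF Xs closed_closure])
      ultimately show ?thesis by metis
    qed
    have fd: "frechet_derivative X (at x) = blinfun_apply (X' x)" for x
      using X'd by (metis frechet_derivative_at)
    define T1 where "T1 i = T (g i) (g' i) (\<lambda>P. 1) (\<lambda>P v. 0) i" for i
    define T2 where "T2 i j = T (g i) (g' i) (\<lambda>P. (P ** P) $ i $ j - P $ i $ j) (\<lambda>P v. (v ** P) $ i $ j + (P ** v) $ i $ j - v $ i $ j) j" for i j
    define T3 where "T3 i p = T (g i) (g' i) (\<lambda>P. P $ p $ i) (\<lambda>P v. v $ p $ i) p" for i p
    define T4 where "T4 i p = T (g i) (g' i) (\<lambda>P. P $ p $ i - P $ i $ p) (\<lambda>P v. v $ p $ i - v $ i $ p) p" for i p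
    have i1: "integrable V (T1 i)" for i unfolding T1_def by (rule T_int[OF gC C1d_const])
    have i2: "integrable V (T2 i j)" for i j unfolding T2_def by (rule T_int[OF gC C1d_pq])
    have i3: "integrable V (T3 i p)" for i p unfolding T3_def by (rule T_int[OF gC C1d_nth2])
    have i4: "integrable V (T4 i p)" for i p unfolding T4_def by (rule T_int[OF gC C1d_pd])
    have z1: "integral\<^sup>L V (T1 i) = 0" for i unfolding T1_def by (rule TEST[OF gC gs C1d_const])
    have z2: "integral\<^sup>L V (T2 i j) = 0" for i j unfolding T2_def by (rule TEST[OF gC gs C1d_pq])
    have z3: "integral\<^sup>L V (T3 i p) = 0" for i p unfolding T3_def by (rule TEST[OF gC gs C1d_nth2])
    have z4: "integral\<^sup>L V (T4 i p) = 0" for i p unfolding T4_def by (rule TEST[OF gC gs C1d_pd])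
    define R where "R i z = 2 * T1 i z + (\<Sum>j\<in>UNIV. T2 i j z) - (\<Sum>p\<in>UNIV. T3 i p z) + (\<Sum>p\<in>UNIV. T4 i p z)" for i z
    have Rint: "integrable V (R i)" for i
      unfolding R_def
      by (intro Bochner_Integration.integrable_add Bochner_Integration.integrable_diff
          Bochner_Integration.integrable_sum integrable_mult_right i1 i2 i3 i4)
    have R0: "integral\<^sup>L V (R i) = 0" for i
      unfolding R_def
      by (simp add: Bochner_Integration.integral_add Bochner_Integration.integral_diff
          integral_sum i1 i2 i3 i4 z1 z2 z3 z4 Bochner_Integration.integrable_sum)
    define D where "D z = divP (snd z) X (fst z)" for z
    define HX where "HX z = H z \<bullet> X (fst z)" for z
    have Deq: "D z = (\<Sum>i\<in>UNIV. \<Sum>j\<in>UNIV. snd z $ i $ j * g' i (fst z) (axis j 1))" for z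
      by (simp add: D_def divP_def fd g'_def)
    have HXeq: "HX z = (\<Sum>i\<in>UNIV. h i z * g i (fst z))" for z
      by (simp add: HX_def H_def inner_vec_def g_def)
    have Dc: "continuous_on UNIV D"
      unfolding Deq[abs_def] g'_def by (intro continuous_intros cfst[OF X'c])
    have mHX: "HX \<in> borel_measurable V"
      unfolding HXeq[abs_def]
      by (intro borel_measurable_sum borel_measurable_times mh contV cfst C1d_cont[OF gC])
    have ae: "AE z in V. D z + HX z = (\<Sum>i\<in>UNIV. R i z)"
      using aeGood aeh
    proof (eventually_elim)
      case (elim z)
      have sym: "\<And>a b. snd z $ a $ b = snd z $ b $ a" using elim(1) sym_of_transpose by blast
      have idem: "\<And>a b. (snd z ** snd z) $ a $ b = snd z $ a $ b" using elim(1) by simp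
      have "R i z = (\<Sum>j\<in>UNIV. snd z $ i $ j * g' i (fst z) (axis j 1))
          + g i (fst z) * (\<Sum>j\<in>UNIV. \<Sum>k\<in>UNIV. B z j i k * snd z $ k $ j)" for i
        unfolding R_def T1_def T2_def T3_def T4_def by (rule COMB[OF sym idem, symmetric])
      then show ?case
        using elim(2) by (simp add: Deq HXeq sum.distrib mult.commute)
    qed
    have "integrable V (\<lambda>z. \<Sum>i\<in>UNIV. R i z)" by (intro Bochner_Integration.integrable_sum Rint)
    then have DHint: "integrable V (\<lambda>z. D z + HX z)"
      by (rule integrable_cong_AE_imp) (use ae mHX contV[OF Dc] in \<open>auto elim!: eventually_mono\<close>)
    have Dint: "integrable V D" by (rule cont_int[OF Dc])
    have HXint: "integrable V HX"
      using Bochner_Integration.integrable_diff[OF DHint Dint] by simp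
    have "integral\<^sup>L V (\<lambda>z. D z + HX z) = integral\<^sup>L V (\<lambda>z. \<Sum>i\<in>UNIV. R i z)"
      by (rule integral_cong_AE) (use ae mHX contV[OF Dc] Rint in \<open>auto intro: borel_measurable_integrable\<close>)
    also have "\<dots> = 0" by (simp add: integral_sum Rint R0)
    finally have "integral\<^sup>L V D + integral\<^sup>L V HX = 0"
      by (simp add: Bochner_Integration.integral_add[OF Dint HXint])
    then show "integral\<^sup>L V (\<lambda>z. divP (snd z) X (fst z)) = - integral\<^sup>L V (\<lambda>z. H z \<bullet> X (fst z))"
      unfolding D_def[symmetric] HX_def[symmetric] by (simp add: fun_eq_iff eq_neg_iff_add_eq_0)
  qed
  moreover have "AE z in V. relative_mean_curvature Q H z = 0"
    using aeGood by (auto elim!: eventually_mono simp: relative_mean_curvature_def H_def h_def vec_eq_iff)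
  ultimately have "null_relative_mean_curvature Q V"
    unfolding null_relative_mean_curvature_def by blast
  then show False using assms(7) var nz by blast
qed


end
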